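(* Let $0<T<\infty$, $\Delta=(0,T]$, and let $F$ be a distribution on $[0,\infty)$ belonging to $\mathcal L_\Delta$. Assume there exists $x_0$ such that $g(x)=-\ln F(x+\Delta)$ is concave on $[x_0,\infty)$, and there exists a function $h(x)\uparrow\infty$ such that $F(x+t+\Delta)\sim F(x+\Delta)$ as $x\to\infty$ uniformly in $|t|\le h(x)$ and $x\,F(h(x)+\Delta)\to0$ as $x\to\infty$. Then $F\in\mathcal S_\Delta$.
   Context: $x+\Delta=(x,x+T]$. $F\in\mathcal L_\Delta$ means $F(x+\Delta)>0$ for all large $x$ and $F(x+t+\Delta)/F(x+\Delta)\to1$ as $x\to\infty$ uniformly in $t\in[0,1]$. A distribution $F$ on $[0,\infty)$ with unbounded support is in $\mathcal S_\Delta$ if $F\in\mathcal L_\Delta$ and $(F*F)(x+\Delta)\sim2F(x+\Delta)$ as $x\to\infty$. $a\sim b$ means $a/b\to1$. *)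

theory Defs
  imports "HOL-Probability.Probability" "HOL-Library.Landau_Symbols"
begin

definition distr_nonneg :: "real measure \<Rightarrow> bool" where
  "distr_nonneg M \<longleftrightarrow> prob_space M \<and> sets M = sets borel \<and> measure M {..<0} = 0"

text \<open>F(x + Delta) with Delta = (0,T], i.e. F((x, x+T]).\<close>
definition int_prob :: "real measure \<Rightarrow> real \<Rightarrow> real \<Rightarrow> real" where
  "int_prob M T x = measure M {x<..x+T}"

definition local_long_tailed :: "real measure \<Rightarrow> real \<Rightarrow> bool" where
  "local_long_tailed M T \<longleftrightarrow>
     eventually (\<lambda>x. int_prob M T x > 0) at_top \<and>
     (\<forall>\<epsilon>>0. eventually (\<lambda>x. \<forall>t\<in>{0..1}.
         \<bar>int_prob M T (x + t) / int_prob M T x - 1\<bar> < \<epsilon>) at_top)"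

definition local_subexp :: "real measure \<Rightarrow> real \<Rightarrow> bool" where
  "local_subexp M T \<longleftrightarrow>
     (\<forall>x. measure M {x<..} > 0) \<and> local_long_tailed M T \<and>
     ((\<lambda>x. int_prob (M \<star> M) T x) \<sim>[at_top] (\<lambda>x. 2 * int_prob M T x))"

end

theory Submission
  imports Defs
begin

lemma sets_MM:
  assumes "sets M = sets (borel::real measure)"
  shows "sets (M \<Otimes>\<^sub>M M) = sets (borel :: (real \<times> real) measure)"
proof -
  have "sets (M \<Otimes>\<^sub>M M) = sets (borel \<Otimes>\<^sub>M borel)" by (rule sets_pair_measure_cong[OF assms assms])
  then show ?thesis by (simp only: borel_prod)
qed

lemma conv_eq:
  assumes "prob_space M" "sets M = sets (borel::real measure)"
  shows "measure (M \<star> M) {x<..x+T} = measure (M \<Otimes>\<^sub>M M) {p. x < fst p + snd p \<and> fst p + snd p \<le> x + T}"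
proof -
  have m0: "(\<lambda>(x, y). x + y) \<in> borel_measurable (borel :: (real \<times> real) measure)"
    unfolding case_prod_beta by (intro borel_measurable_continuous_onI continuous_intros)
  have m: "(\<lambda>(x, y). x + y) \<in> borel_measurable (M \<Otimes>\<^sub>M M)"
    using m0 measurable_cong_sets[OF sets_MM[OF assms(2)] refl] by blast
  have sp: "space (M \<Otimes>\<^sub>M M) = UNIV"
    using sets_eq_imp_space_eq[OF assms(2)] by (simp add: space_pair_measure)
  have e: "(\<lambda>(x, y). x + y) -` {x<..x+T} \<inter> space (M \<Otimes>\<^sub>M M)
      = {p. x < fst p + snd p \<and> fst p + snd p \<le> x + T}"
    unfolding sp by auto
  have "measure (M \<star> M) {x<..x+T} = measure (M \<Otimes>\<^sub>M M) ((\<lambda>(x, y). x + y) -` {x<..x+T} \<inter> space (M \<Otimes>\<^sub>M M))"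
    unfolding convolution_def by (rule measure_distr[OF m]) simp
  then show ?thesis unfolding e .
qed


lemma lin_at_top:
  fixes c d :: real assumes "c > 0"
  shows "filterlim (\<lambda>y. y / c + d) at_top at_top"
  unfolding filterlim_at_top
proof
  fix Z
  show "eventually (\<lambda>y. Z \<le> y / c + d) at_top"
    using eventually_ge_at_top[of "c * (Z - d)"]
  proof eventually_elim
    case (elim y)
    hence "Z - d \<le> y / c" using assms by (simp add: field_simps)
    then show ?case by simp
  qed
qed

lemma concave_mono:
  fixes g :: "real \<Rightarrow> real"
  assumes cc: "concave_on {x0..} g" and lim: "filterlim g at_top at_top"
    and "x0 \<le> a" "a \<le> b"
  shows "g a \<le> g b"
proof (rule ccontr)
  assume "\<not> g a \<le> g b"
  hence gab: "g b < g a" by simp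
  with \<open>a \<le> b\<close> have ab: "a < b" by (cases "a = b") auto
  have bound: "g c \<le> g b" if "c > b" for c
  proof -
    define t where "t = (b - a) / (c - a)"
    have ca: "0 < c - a" using ab that by linarith
    have tpos: "0 < t" unfolding t_def using ab ca by (intro divide_pos_pos) auto
    have "t \<le> 1" unfolding t_def using ca that by (simp add: divide_le_eq)
    with tpos have t0: "0 \<le> t" "t \<le> 1" by auto
    have tt: "t * (c - a) = b - a" using ab that by (simp add: t_def)
    have bt: "b = (1 - t) * a + t * c"
    proof -
      have "(1 - t) * a + t * c = a + t * (c - a)" by (simp add: algebra_simps)
      thus ?thesis using tt by linarith
    qed
    have "(1 - t) * g a + t * g c \<le> g ((1 - t) *\<^sub>R a + t *\<^sub>R c)"
      using concave_onD[OF cc t0] assms(3,4) that by auto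
    hence "(1 - t) * g a + t * g c \<le> g b" using bt by simp
    moreover have "(1 - t) * g b \<le> (1 - t) * g a" using t0 gab by (intro mult_left_mono) auto
    ultimately have "t * g c \<le> t * g b" by (simp add: algebra_simps)
    thus ?thesis using tpos by simp
  qed
  have "eventually (\<lambda>c. g c > g b) at_top"
    using lim unfolding filterlim_at_top_dense by blast
  hence "eventually (\<lambda>c. g c > g b \<and> c > b) at_top"
    using eventually_gt_at_top[of b] by (rule eventually_conj)
  then obtain N where N: "\<And>n. n \<ge> N \<Longrightarrow> g n > g b \<and> n > b"
    by (auto simp: eventually_at_top_linorder)
  have "g N > g b" "N > b" using N[of N] by auto
  with bound[of N] show False by linarith
qed

lemma concave_prod:
  fixes g :: "real \<Rightarrow> real"
  assumes cc: "concave_on {x0..} g" and "x0 \<le> p" "p \<le> u" "u \<le> q" "u + v = p + q"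
  shows "g p + g q \<le> g u + g v"
proof (cases "p = q")
  case True then show ?thesis using assms by auto
next
  case False
  hence pq: "p < q" using assms by auto
  define t where "t = (u - p) / (q - p)"
  have t0: "0 \<le> t" "t \<le> 1" using assms pq by (auto simp: t_def)
  have tt: "t * (q - p) = u - p" using pq by (simp add: t_def)
  have ut: "u = (1 - t) * p + t * q"
  proof -
    have "(1 - t) * p + t * q = p + t * (q - p)" by (simp add: algebra_simps)
    thus ?thesis using tt by linarith
  qed
  have vt: "v = t * p + (1 - t) * q"
  proof -
    have "t * p + (1 - t) * q = q - t * (q - p)" by (simp add: algebra_simps)
    thus ?thesis using tt assms(5) by linarith
  qed
  have e1: "(1 - t) *\<^sub>R p + t *\<^sub>R q = u" using ut by simp
  have e2: "(1 - (1 - t)) *\<^sub>R p + (1 - t) *\<^sub>R q = v" using vt by simp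
  have "(1 - t) * g p + t * g q \<le> g u"
    using concave_onD[OF cc t0, of p q] assms e1 by auto
  moreover have "(1 - (1 - t)) * g p + (1 - t) * g q \<le> g v"
    using concave_onD[OF cc, of "1 - t" p q] t0 assms e2 by auto
  ultimately show ?thesis by (simp add: algebra_simps)
qed

context
  fixes M :: "real measure" and T :: real
  assumes prob: "prob_space M" and sM: "sets M = sets (borel::real measure)" and Tpos: "0 < T"
begin

interpretation R: real_distribution M
  using prob sM by (simp add: real_distribution_def real_distribution_axioms_def)

lemma spM: "space M = UNIV"
  using sets_eq_imp_space_eq[OF sM] by simp

lemma meas_sets[simp]: "A \<in> sets M"
  if "A \<in> sets (borel::real measure)" for A using that sM by simp

lemma tail_lim: "((\<lambda>y. measure M {y<..}) \<longlongrightarrow> 0) at_top"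
proof -
  have e: "measure M {y<..} = 1 - cdf M y" for y
  proof -
    have "{y<..} = space M - {..y}" using spM by auto
    then show ?thesis using R.prob_compl[of "{..y}"] by (simp add: cdf_def2)
  qed
  have "((\<lambda>y. 1 - cdf M y) \<longlongrightarrow> 1 - 1) at_top"
    by (intro tendsto_intros R.cdf_lim_at_top_prob)
  then show ?thesis by (simp add: e)
qed

lemma f_nonneg: "0 \<le> int_prob M T x"
  by (simp add: int_prob_def)

lemma f_le_tail: "int_prob M T x \<le> measure M {x<..}"
  unfolding int_prob_def by (intro R.finite_measure_mono) auto

lemma f_lim: "((\<lambda>x. int_prob M T x) \<longlongrightarrow> 0) at_top"
  by (rule tendsto_sandwich[OF _ _ tendsto_const tail_lim])
     (auto intro!: always_eventually f_nonneg f_le_tail)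

lemma sum_intervals: "measure M {a<..a + real n * T} = (\<Sum>j<n. int_prob M T (a + real j * T))"
proof (induction n)
  case 0 then show ?case by simp
next
  case (Suc n)
  have "{a<..a + real (Suc n) * T} = {a<..a + real n * T} \<union> {a + real n * T<..a + real n * T + T}"
  proof -
    have "0 \<le> T * real n" using Tpos by simp
    then show ?thesis using Tpos by (auto simp: algebra_simps) (smt (verit) \<open>0 \<le> T * real n\<close>)
  qed
  moreover have "measure M ({a<..a + real n * T} \<union> {a + real n * T<..a + real n * T + T})
     = measure M {a<..a + real n * T} + measure M {a + real n * T<..a + real n * T + T}"
    by (rule R.finite_measure_Union) auto
  ultimately show ?case using Suc by (simp add: int_prob_def)
qed


lemma xf_lim:
  assumes mon: "\<And>a b. x1 \<le> a \<Longrightarrow> a \<le> b \<Longrightarrow> int_prob M T b \<le> int_prob M T a"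
  shows "((\<lambda>y. y * int_prob M T y) \<longlongrightarrow> 0) at_top"
proof -
  let ?f = "int_prob M T"
  have key: "y * ?f y \<le> 2 * T * (measure M {y/2<..} + ?f y)" if y: "y \<ge> 2 * max x1 0" for y
  proof -
    define z where "z = y / (2 * T)"
    define n where "n = nat \<lfloor>z\<rfloor>"
    have z0: "0 \<le> z" using y Tpos by (simp add: z_def)
    have rn: "real n = of_int \<lfloor>z\<rfloor>" using z0 by (simp add: n_def)
    have zn: "z \<le> real n + 1" using rn by linarith
    have nz: "real n \<le> z" using rn by linarith
    have "real n * ?f y = (\<Sum>j<n. ?f y)" by simp
    also have "\<dots> \<le> (\<Sum>j<n. ?f (y/2 + real j * T))"
    proof (intro sum_mono mon)
      fix j assume "j \<in> {..<n}"
      hence "real j \<le> real n" by simp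
      hence "real j * T \<le> z * T" using nz Tpos by (intro mult_right_mono) auto
      also have "z * T = y / 2" using Tpos by (simp add: z_def)
      finally show "y / 2 + real j * T \<le> y" by simp
      have "0 \<le> real j * T" using Tpos by simp
      then show "x1 \<le> y / 2 + real j * T" using y by linarith
    qed
    also have "\<dots> = measure M {y/2<..y/2 + real n * T}" by (rule sum_intervals[symmetric])
    also have "\<dots> \<le> measure M {y/2<..}" by (intro R.finite_measure_mono) auto
    finally have A: "real n * ?f y \<le> measure M {y/2<..}" .
    have "y = 2 * T * z" using Tpos by (simp add: z_def)
    hence "y * ?f y \<le> 2 * T * (real n + 1) * ?f y"
      using zn Tpos f_nonneg[of y] by (auto intro!: mult_right_mono)
    also have "\<dots> = 2 * T * (real n * ?f y + ?f y)" by (simp add: algebra_simps)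
    also have "\<dots> \<le> 2 * T * (measure M {y/2<..} + ?f y)" using A Tpos by simp
    finally show ?thesis .
  qed
  have half: "filterlim (\<lambda>y::real. y / 2) at_top at_top"
    using lin_at_top[of 2 0] by simp
  have "((\<lambda>y. 2 * T * (measure M {y/2<..} + ?f y)) \<longlongrightarrow> 2 * T * (0 + 0)) at_top"
    by (intro tendsto_intros filterlim_compose[OF tail_lim half] f_lim)
  hence up: "((\<lambda>y. 2 * T * (measure M {y/2<..} + ?f y)) \<longlongrightarrow> 0) at_top" by simp
  show ?thesis
  proof (rule tendsto_sandwich[OF _ _ tendsto_const up])
    show "eventually (\<lambda>y. 0 \<le> y * ?f y) at_top"
      using eventually_ge_at_top[of 0] by eventually_elim (simp add: f_nonneg)
    show "eventually (\<lambda>y. y * ?f y \<le> 2 * T * (measure M {y/2<..} + ?f y)) at_top"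
      using eventually_ge_at_top[of "2 * max x1 0"] by eventually_elim (rule key)
  qed
qed

interpretation P: pair_prob_space M M
  by (simp add: pair_prob_space_def pair_sigma_finite_def prob prob_space_imp_sigma_finite)

lemma sets_P[simp]: "A \<in> sets (M \<Otimes>\<^sub>M M)" if "A \<in> sets (borel :: (real\<times>real) measure)" for A
  using that sets_MM[OF sM] by simp

lemma borel_E: "{p::real\<times>real. x < fst p + snd p \<and> fst p + snd p \<le> x + T \<and> Q p} \<in> sets borel"
  if "{p. Q p} \<in> sets borel" for x Q
proof -
  have "{p::real\<times>real. x < fst p + snd p \<and> fst p + snd p \<le> x + T \<and> Q p}
     = ((\<lambda>p. fst p + snd p) -` {x<..x+T} \<inter> space borel) \<inter> {p. Q p}" by auto
  moreover
  have m: "(\<lambda>p::real\<times>real. fst p + snd p) \<in> borel_measurable borel"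
    by (intro borel_measurable_continuous_onI continuous_intros)
  have "(\<lambda>p::real\<times>real. fst p + snd p) -` {x<..x+T} \<inter> space borel \<in> sets borel"
    by (rule measurable_sets[OF m]) auto
  ultimately show ?thesis using that by auto
qed


lemma AE_nonneg: "measure M {..<0} = 0 \<Longrightarrow> AE a in M. 0 \<le> a"
  by (rule AE_I'[of "{..<0}"]) (auto simp: R.emeasure_eq_measure null_sets_def)

lemma E1_bounds:
  assumes ae: "AE a in M. 0 \<le> a" and d: "0 \<le> d" "d \<le> 1"
    and near: "\<And>a. 0 \<le> a \<Longrightarrow> a \<le> H \<Longrightarrow>
        (1 - d) * int_prob M T x \<le> int_prob M T (x - a) \<and> int_prob M T (x - a) \<le> (1 + d) * int_prob M T x"
    and fpos: "0 \<le> int_prob M T x"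
  shows "(1 - d) * int_prob M T x * measure M {0..H}
           \<le> measure (M \<Otimes>\<^sub>M M) {p. x < fst p + snd p \<and> fst p + snd p \<le> x + T \<and> fst p \<le> H}"
    and "measure (M \<Otimes>\<^sub>M M) {p. x < fst p + snd p \<and> fst p + snd p \<le> x + T \<and> fst p \<le> H}
           \<le> (1 + d) * int_prob M T x"
    and "(1 - d) * int_prob M T x * measure M {0..H}
           \<le> measure (M \<Otimes>\<^sub>M M) {p. x < fst p + snd p \<and> fst p + snd p \<le> x + T \<and> snd p \<le> H}"
    and "measure (M \<Otimes>\<^sub>M M) {p. x < fst p + snd p \<and> fst p + snd p \<le> x + T \<and> snd p \<le> H}
           \<le> (1 + d) * int_prob M T x"
proof -
  let ?f = "int_prob M T"
  define E where "E = {p::real\<times>real. x < fst p + snd p \<and> fst p + snd p \<le> x + T \<and> fst p \<le> H}"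
  define E' where "E' = {p::real\<times>real. x < fst p + snd p \<and> fst p + snd p \<le> x + T \<and> snd p \<le> H}"
  have Es: "E \<in> sets (M \<Otimes>\<^sub>M M)" unfolding E_def by (intro sets_P borel_E borel_closed closed_Collect_le continuous_intros)
  have Es': "E' \<in> sets (M \<Otimes>\<^sub>M M)" unfolding E'_def by (intro sets_P borel_E borel_closed closed_Collect_le continuous_intros)
  have sl: "Pair a -` E = (if a \<le> H then {x - a<..x - a + T} else {})" for a
    by (auto simp: E_def)
  have sl': "(\<lambda>b. (b, a)) -` E' = (if a \<le> H then {x - a<..x - a + T} else {})" for a
    by (auto simp: E'_def)
  have em: "emeasure M (if a \<le> H then {x - a<..x - a + T} else {}) = 
     (if a \<le> H then ennreal (?f (x - a)) else 0)" for a
    by (simp add: R.emeasure_eq_measure int_prob_def)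
  define I where "I = (\<integral>\<^sup>+a. (if a \<le> H then ennreal (?f (x - a)) else 0) \<partial>M)"
  have eE: "emeasure (M \<Otimes>\<^sub>M M) E = I"
    unfolding I_def by (simp add: sigma_finite_measure.emeasure_pair_measure_alt[OF prob_space_imp_sigma_finite[OF prob] Es] sl em)
  have eE': "emeasure (M \<Otimes>\<^sub>M M) E' = I"
    unfolding I_def by (simp add: P.emeasure_pair_measure_alt2[OF Es'] sl' em)
  have lo: "ennreal ((1 - d) * ?f x) * emeasure M {0..H} \<le> I"
  proof -
    have "ennreal ((1 - d) * ?f x) * emeasure M {0..H} = (\<integral>\<^sup>+a. ennreal ((1 - d) * ?f x) * indicator {0..H} a \<partial>M)"
      by (simp add: nn_integral_cmult_indicator)
    also have "\<dots> \<le> I" unfolding I_def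
      by (intro nn_integral_mono) (auto simp: indicator_def near ennreal_leI)
    finally show ?thesis .
  qed
  have up: "I \<le> ennreal ((1 + d) * ?f x)"
  proof -
    have "I \<le> (\<integral>\<^sup>+a. ennreal ((1 + d) * ?f x) \<partial>M)" unfolding I_def
      by (intro nn_integral_mono_AE, use ae in eventually_elim) (auto simp: near ennreal_leI)
    also have "\<dots> = ennreal ((1 + d) * ?f x)" using R.emeasure_space_1 by (simp add: spM)
    finally show ?thesis .
  qed
  have c1: "(1 - d) * ?f x * measure M {0..H} \<le> enn2real I"
  proof -
    have "ennreal ((1 - d) * ?f x * measure M {0..H}) \<le> I"
      using lo d fpos by (simp add: R.emeasure_eq_measure ennreal_mult)
    moreover have "I \<noteq> \<infinity>" using up by (auto simp: top_unique)
    ultimately have "enn2real (ennreal ((1 - d) * ?f x * measure M {0..H})) \<le> enn2real I"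
      by (intro enn2real_mono) (auto simp: top.not_eq_extremum)
    moreover have "0 \<le> (1 - d) * ?f x * measure M {0..H}" using d fpos by simp
    ultimately show ?thesis by simp
  qed
  have c2: "enn2real I \<le> (1 + d) * ?f x"
    using up d fpos by (simp add: enn2real_leI)
  have "measure (M \<Otimes>\<^sub>M M) E = enn2real I" "measure (M \<Otimes>\<^sub>M M) E' = enn2real I"
    using eE eE' by (simp_all add: measure_def)
  then show "(1 - d) * ?f x * measure M {0..H} \<le> measure (M \<Otimes>\<^sub>M M) {p. x < fst p + snd p \<and> fst p + snd p \<le> x + T \<and> fst p \<le> H}"
    "measure (M \<Otimes>\<^sub>M M) {p. x < fst p + snd p \<and> fst p + snd p \<le> x + T \<and> fst p \<le> H} \<le> (1 + d) * ?f x"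
    "(1 - d) * ?f x * measure M {0..H} \<le> measure (M \<Otimes>\<^sub>M M) {p. x < fst p + snd p \<and> fst p + snd p \<le> x + T \<and> snd p \<le> H}"
    "measure (M \<Otimes>\<^sub>M M) {p. x < fst p + snd p \<and> fst p + snd p \<le> x + T \<and> snd p \<le> H} \<le> (1 + d) * ?f x"
    using c1 c2 unfolding E_def E'_def by linarith+
qed

lemma measure_rect: "measure (M \<Otimes>\<^sub>M M) ({a<..b} \<times> {c<..d}) = measure M {a<..b} * measure M {c<..d}"
proof -
  have "emeasure (M \<Otimes>\<^sub>M M) ({a<..b} \<times> {c<..d}) = emeasure M {a<..b} * emeasure M {c<..d}"
    by (rule sigma_finite_measure.emeasure_pair_measure_Times[OF prob_space_imp_sigma_finite[OF prob]]) auto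
  then have "ennreal (measure (M \<Otimes>\<^sub>M M) ({a<..b} \<times> {c<..d})) = ennreal (measure M {a<..b} * measure M {c<..d})"
    by (simp only: P.emeasure_eq_measure R.emeasure_eq_measure ennreal_mult'' measure_nonneg)
  then show ?thesis by (simp add: ennreal_inj)
qed

lemma fprod:
  assumes cc: "concave_on {lo..} (\<lambda>x. - ln (int_prob M T x))"
    and pos: "\<And>y. y \<ge> lp \<Longrightarrow> int_prob M T y > 0"
    and "lo \<le> p" "lp \<le> p" "p \<le> u" "u \<le> q" "u + v = p + q"
  shows "int_prob M T u * int_prob M T v \<le> int_prob M T p * int_prob M T q"
proof -
  let ?f = "int_prob M T"
  have fp: "?f p > 0" "?f q > 0" using pos assms by auto
  show ?thesis
  proof (cases "?f u = 0 \<or> ?f v = 0")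
    case True then show ?thesis using fp by auto
  next
    case False
    hence fu: "?f u > 0" "?f v > 0" using f_nonneg[of u] f_nonneg[of v] by auto
    have "- ln (?f p) + - ln (?f q) \<le> - ln (?f u) + - ln (?f v)"
      by (rule concave_prod[OF cc]) (use assms in auto)
    hence "ln (?f u * ?f v) \<le> ln (?f p * ?f q)" using fp fu by (simp add: ln_mult)
    then show ?thesis using fp fu by simp
  qed
qed

lemma E3_bound:
  assumes cc: "concave_on {x0..} (\<lambda>x. - ln (int_prob M T x))"
    and pos: "\<And>y. y \<ge> x1 \<Longrightarrow> int_prob M T y > 0"
    and px: "x0 \<le> H - 2 * T" "x1 \<le> H - 2 * T" and H0: "0 \<le> H" and Hx: "2 * H \<le> x"
  shows "measure (M \<Otimes>\<^sub>M M) {p. x < fst p + snd p \<and> fst p + snd p \<le> x + T \<and> H < fst p \<and> H < snd p}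
     \<le> (x / T + 2) * (int_prob M T (H - 2 * T) * (int_prob M T (x - T - (H - 2 * T)) + int_prob M T (x - (H - 2 * T))))"
proof -
  let ?f = "int_prob M T"
  define p where "p = H - 2 * T"
  define C where "C = ?f p * (?f (x - T - p) + ?f (x - p))"
  define K where "K = nat \<lceil>(x + T - 2 * H) / T\<rceil>"
  define u where "u k = H + real k * T" for k :: nat
  define v where "v k = x - H - (real k + 1) * T" for k :: nat
  define R where "R k = {u k<..u k + T} \<times> {v k<..v k + 2 * T}" for k
  define E where "E = {p::real\<times>real. x < fst p + snd p \<and> fst p + snd p \<le> x + T \<and> H < fst p \<and> H < snd p}"
  have kK: "real k * T < x + T - 2 * H" if "k < K" for k
  proof -
    have "real k < (x + T - 2 * H) / T" using that unfolding K_def by linarith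
    thus ?thesis using Tpos by (simp add: field_simps)
  qed
  have cover: "E \<subseteq> (\<Union>k\<in>{..<K}. R k)"
  proof
    fix z assume "z \<in> E"
    then obtain a b where z: "z = (a, b)" and ab: "x < a + b" "a + b \<le> x + T" "H < a" "H < b"
      by (cases z) (auto simp: E_def)
    define w where "w = (a - H) / T"
    have w0: "0 < w" using ab Tpos by (simp add: w_def)
    define k where "k = nat (\<lceil>w\<rceil> - 1)"
    have rk: "real k = of_int \<lceil>w\<rceil> - 1" using w0 by (simp add: k_def) 
    have k1: "real k < w" "w \<le> real k + 1" using rk by linarith+
    have "real k * T < a - H" using k1(1) Tpos by (simp add: w_def field_simps)
    moreover have "a - H \<le> (real k + 1) * T" using k1(2) Tpos by (simp add: w_def field_simps)
    ultimately have a1: "u k < a" "a \<le> u k + T" by (auto simp: u_def algebra_simps)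
    have "w < (x + T - 2 * H) / T" using ab Tpos by (simp add: w_def divide_strict_right_mono)
    hence "k < K" using k1 unfolding K_def by linarith
    moreover have "z \<in> R k" using a1 ab unfolding R_def z u_def v_def by (auto simp: algebra_simps)
    ultimately show "z \<in> (\<Union>k\<in>{..<K}. R k)" by auto
  qed
  have Rs: "R k \<in> sets (M \<Otimes>\<^sub>M M)" for k
    unfolding R_def by (intro pair_measureI) auto
  have Es: "E \<in> sets (M \<Otimes>\<^sub>M M)" unfolding E_def
    by (intro sets_P borel_E borel_open open_Collect_conj open_Collect_less continuous_intros)
  have "measure (M \<Otimes>\<^sub>M M) E \<le> measure (M \<Otimes>\<^sub>M M) (\<Union>k\<in>{..<K}. R k)"
    using cover Rs by (intro P.finite_measure_mono) auto
  also have "\<dots> \<le> (\<Sum>k<K. measure (M \<Otimes>\<^sub>M M) (R k))"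
    using Rs by (intro P.finite_measure_subadditive_finite) auto
  also have "\<dots> \<le> (\<Sum>k<K. C)"
  proof (intro sum_mono)
    fix k assume "k \<in> {..<K}"
    hence kk: "real k * T < x + T - 2 * H" using kK by auto
    have m2: "measure M {v k<..v k + 2 * T} = ?f (v k) + ?f (v k + T)"
      using sum_intervals[of "v k" 2] by (simp add: numeral_2_eq_2 algebra_simps)
    have vp: "p \<le> v k" using kk unfolding v_def p_def by (simp add: algebra_simps)
    have "0 \<le> real k * T" using Tpos by simp
    hence up: "p \<le> u k" using Tpos unfolding u_def p_def by linarith
    have 1: "?f (u k) * ?f (v k) \<le> ?f p * ?f (x - T - p)"
      by (rule fprod[where lo=x0 and lp=x1, OF cc pos, of p "u k" "x - T - p" "v k"]) (use px vp up Tpos kk in \<open>auto simp: p_def u_def v_def algebra_simps\<close>)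
    have 2: "?f (u k) * ?f (v k + T) \<le> ?f p * ?f (x - p)"
      by (rule fprod[where lo=x0 and lp=x1, OF cc pos, of p "u k" "x - p" "v k + T"]) (use px vp up Tpos kk in \<open>auto simp: p_def u_def v_def algebra_simps\<close>)
    have "measure (M \<Otimes>\<^sub>M M) (R k) = ?f (u k) * (?f (v k) + ?f (v k + T))"
      unfolding R_def measure_rect m2 by (simp add: int_prob_def)
    also have "\<dots> \<le> C" using 1 2 by (simp add: C_def algebra_simps)
    finally show "measure (M \<Otimes>\<^sub>M M) (R k) \<le> C" .
  qed
  also have "\<dots> = real K * C" by simp
  also have "\<dots> \<le> (x / T + 2) * C"
  proof (intro mult_right_mono)
    show "0 \<le> C" unfolding C_def by (intro mult_nonneg_nonneg add_nonneg_nonneg f_nonneg)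
    have "0 \<le> (x + T - 2 * H) / T" using Hx Tpos by simp
    hence "real K = of_int \<lceil>(x + T - 2 * H) / T\<rceil>" unfolding K_def by simp
    hence "real K \<le> (x + T - 2 * H) / T + 1" by linarith
    also have "\<dots> \<le> x / T + 2" using Tpos H0 by (simp add: field_simps)
    finally show "real K \<le> x / T + 2" .
  qed
  finally show ?thesis unfolding E_def C_def p_def .
qed

lemma W_lim:
  assumes mon: "\<And>a b. x1 \<le> a \<Longrightarrow> a \<le> b \<Longrightarrow> int_prob M T b \<le> int_prob M T a"
   and hlim: "filterlim h at_top at_top"
   and h7: "\<forall>\<epsilon>>0. eventually (\<lambda>x. \<forall>t. \<bar>t\<bar> \<le> h x \<longrightarrow>
            \<bar>int_prob M T (x + t) / int_prob M T x - 1\<bar> < \<epsilon>) at_top"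
   and h8: "((\<lambda>x. x * int_prob M T (h x)) \<longlongrightarrow> 0) at_top"
   and fpos_ev: "eventually (\<lambda>x. int_prob M T x > 0) at_top"
  shows "((\<lambda>x. (x / T + 2) * int_prob M T (min (h x) (x/4) - 2 * T)) \<longlongrightarrow> 0) at_top"
proof -
  let ?f = "int_prob M T"
  let ?p = "\<lambda>x. min (h x) (x/4) - 2 * T"
  have Hlim: "filterlim ?p at_top at_top"
    unfolding filterlim_at_top
  proof
    fix Z
    have "eventually (\<lambda>x. Z + 2 * T \<le> h x) at_top" using hlim by (simp add: filterlim_at_top)
    moreover have "eventually (\<lambda>x. Z + 2 * T \<le> x / 4) at_top"
      using lin_at_top[of 4 0] by (simp add: filterlim_at_top)
    ultimately show "eventually (\<lambda>x. Z \<le> ?p x) at_top" by eventually_elim auto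
  qed
  have fp0: "((\<lambda>x. ?f (?p x)) \<longlongrightarrow> 0) at_top"
    by (rule filterlim_compose[OF f_lim Hlim])
  have lin: "filterlim (\<lambda>x. x / 4 + - (2 * T)) at_top at_top" by (rule lin_at_top) simp
  have "((\<lambda>x. 4 * ((x / 4 + - (2 * T)) * ?f (x / 4 + - (2 * T))) + 8 * T * ?f (x / 4 + - (2 * T)))
        \<longlongrightarrow> 4 * 0 + 8 * T * 0) at_top"
    by (intro tendsto_intros filterlim_compose[OF xf_lim[OF mon] lin] filterlim_compose[OF f_lim lin])
  moreover have "\<And>x. 4 * ((x / 4 + - (2 * T)) * ?f (x / 4 + - (2 * T))) + 8 * T * ?f (x / 4 + - (2 * T))
      = x * ?f (x / 4 - 2 * T)"
    by (simp add: algebra_simps)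
  ultimately have A: "((\<lambda>x. x * ?f (x / 4 - 2 * T)) \<longlongrightarrow> 0) at_top" by simp
  have ev1: "eventually (\<lambda>y. (\<forall>t. \<bar>t\<bar> \<le> h y \<longrightarrow> \<bar>?f (y + t) / ?f y - 1\<bar> < 1) \<and> 2 * T \<le> h y \<and> ?f y > 0) at_top"
  proof -
    have "eventually (\<lambda>y. 2 * T \<le> h y) at_top" using hlim by (simp add: filterlim_at_top)
    then show ?thesis using h7[rule_format, of 1] fpos_ev by (intro eventually_conj) auto
  qed
  hence "eventually (\<lambda>x. (\<forall>t. \<bar>t\<bar> \<le> h (h x) \<longrightarrow> \<bar>?f (h x + t) / ?f (h x) - 1\<bar> < 1) \<and> 2 * T \<le> h (h x) \<and> ?f (h x) > 0) at_top"
    using filterlim_iff[THEN iffD1, OF hlim, rule_format, OF ev1] by simp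
  hence B: "eventually (\<lambda>x. ?f (h x - 2 * T) \<le> 2 * ?f (h x)) at_top"
  proof eventually_elim
    case (elim x)
    hence "\<bar>?f (h x + - (2 * T)) / ?f (h x) - 1\<bar> < 1" using Tpos by (intro elim[THEN conjunct1, rule_format]) auto
    hence "?f (h x - 2 * T) / ?f (h x) < 2" by simp
    thus ?case using elim by (simp add: divide_less_eq)
  qed
  have C: "((\<lambda>x. 2 * (x * ?f (h x)) + x * ?f (x / 4 - 2 * T)) \<longlongrightarrow> 2 * 0 + 0) at_top"
    by (intro tendsto_intros h8 A)
  have D: "((\<lambda>x. x * ?f (?p x)) \<longlongrightarrow> 0) at_top"
  proof (rule tendsto_sandwich[OF _ _ tendsto_const])
    show "eventually (\<lambda>x. 0 \<le> x * ?f (?p x)) at_top"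
      using eventually_ge_at_top[of 0] by eventually_elim (simp add: f_nonneg)
    show "eventually (\<lambda>x. x * ?f (?p x) \<le> 2 * (x * ?f (h x)) + x * ?f (x / 4 - 2 * T)) at_top"
      using eventually_ge_at_top[of 0] B
    proof eventually_elim
      case (elim x)
      have "?f (?p x) \<le> ?f (h x - 2 * T) + ?f (x / 4 - 2 * T)"
        using f_nonneg[of "h x - 2 * T"] f_nonneg[of "x / 4 - 2 * T"]
        by (cases "h x \<le> x / 4") (auto simp: min_def)
      also have "\<dots> \<le> 2 * ?f (h x) + ?f (x / 4 - 2 * T)" using elim by simp
      finally have "x * ?f (?p x) \<le> x * (2 * ?f (h x) + ?f (x / 4 - 2 * T))"
        using elim by (intro mult_left_mono) auto
      thus ?case by (simp add: algebra_simps)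
    qed
  qed (use C in simp)
  have "((\<lambda>x. (1 / T) * (x * ?f (?p x)) + 2 * ?f (?p x)) \<longlongrightarrow> (1/T) * 0 + 2 * 0) at_top"
    by (intro tendsto_intros D fp0)
  moreover have "\<And>x. (1 / T) * (x * ?f (?p x)) + 2 * ?f (?p x) = (x / T + 2) * ?f (?p x)"
    by (simp add: algebra_simps)
  ultimately show ?thesis by simp
qed

lemma decomp:
  assumes "2 * H \<le> x"
  shows "measure (M \<Otimes>\<^sub>M M) {p. x < fst p + snd p \<and> fst p + snd p \<le> x + T \<and> fst p \<le> H}
       + measure (M \<Otimes>\<^sub>M M) {p. x < fst p + snd p \<and> fst p + snd p \<le> x + T \<and> snd p \<le> H}
       \<le> measure (M \<Otimes>\<^sub>M M) {p. x < fst p + snd p \<and> fst p + snd p \<le> x + T}"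
   and "measure (M \<Otimes>\<^sub>M M) {p. x < fst p + snd p \<and> fst p + snd p \<le> x + T}
       \<le> measure (M \<Otimes>\<^sub>M M) {p. x < fst p + snd p \<and> fst p + snd p \<le> x + T \<and> fst p \<le> H}
       + measure (M \<Otimes>\<^sub>M M) {p. x < fst p + snd p \<and> fst p + snd p \<le> x + T \<and> snd p \<le> H}
       + measure (M \<Otimes>\<^sub>M M) {p. x < fst p + snd p \<and> fst p + snd p \<le> x + T \<and> H < fst p \<and> H < snd p}"
proof -
  define S where "S = {p::real\<times>real. x < fst p + snd p \<and> fst p + snd p \<le> x + T}"
  define E1 where "E1 = {p::real\<times>real. x < fst p + snd p \<and> fst p + snd p \<le> x + T \<and> fst p \<le> H}"
  define E2 where "E2 = {p::real\<times>real. x < fst p + snd p \<and> fst p + snd p \<le> x + T \<and> snd p \<le> H}"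
  define E3 where "E3 = {p::real\<times>real. x < fst p + snd p \<and> fst p + snd p \<le> x + T \<and> H < fst p \<and> H < snd p}"
  have s1: "E1 \<in> sets (M \<Otimes>\<^sub>M M)" "E2 \<in> sets (M \<Otimes>\<^sub>M M)" unfolding E1_def E2_def
    by (intro sets_P borel_E borel_closed closed_Collect_le continuous_intros)+
  have s3: "E3 \<in> sets (M \<Otimes>\<^sub>M M)" unfolding E3_def
    by (intro sets_P borel_E borel_open open_Collect_conj open_Collect_less continuous_intros)
  have sS: "S \<in> sets (M \<Otimes>\<^sub>M M)"
  proof -
    have "S = {p::real\<times>real. x < fst p + snd p \<and> fst p + snd p \<le> x + T \<and> True}" by (simp add: S_def)
    also have "\<dots> \<in> sets (M \<Otimes>\<^sub>M M)" by (intro sets_P borel_E) simp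
    finally show ?thesis .
  qed
  have dj: "E1 \<inter> E2 = {}" using assms by (auto simp: E1_def E2_def)
  have "measure (M \<Otimes>\<^sub>M M) E1 + measure (M \<Otimes>\<^sub>M M) E2 = measure (M \<Otimes>\<^sub>M M) (E1 \<union> E2)"
    using s1 dj by (simp add: P.finite_measure_Union)
  also have "\<dots> \<le> measure (M \<Otimes>\<^sub>M M) S"
    using s1 sS by (intro P.finite_measure_mono) (auto simp: E1_def E2_def S_def)
  finally show "measure (M \<Otimes>\<^sub>M M) {p. x < fst p + snd p \<and> fst p + snd p \<le> x + T \<and> fst p \<le> H}
       + measure (M \<Otimes>\<^sub>M M) {p. x < fst p + snd p \<and> fst p + snd p \<le> x + T \<and> snd p \<le> H}
       \<le> measure (M \<Otimes>\<^sub>M M) {p. x < fst p + snd p \<and> fst p + snd p \<le> x + T}"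
    unfolding E1_def E2_def S_def .
  have "S = (E1 \<union> E2) \<union> E3" by (auto simp: E1_def E2_def E3_def S_def)
  hence "measure (M \<Otimes>\<^sub>M M) S \<le> measure (M \<Otimes>\<^sub>M M) (E1 \<union> E2) + measure (M \<Otimes>\<^sub>M M) E3"
    using s1 s3 by (simp add: measure_Un_le)
  also have "measure (M \<Otimes>\<^sub>M M) (E1 \<union> E2) \<le> measure (M \<Otimes>\<^sub>M M) E1 + measure (M \<Otimes>\<^sub>M M) E2"
    using s1 by (simp add: measure_Un_le)
  finally show "measure (M \<Otimes>\<^sub>M M) {p. x < fst p + snd p \<and> fst p + snd p \<le> x + T}
       \<le> measure (M \<Otimes>\<^sub>M M) {p. x < fst p + snd p \<and> fst p + snd p \<le> x + T \<and> fst p \<le> H}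
       + measure (M \<Otimes>\<^sub>M M) {p. x < fst p + snd p \<and> fst p + snd p \<le> x + T \<and> snd p \<le> H}
       + measure (M \<Otimes>\<^sub>M M) {p. x < fst p + snd p \<and> fst p + snd p \<le> x + T \<and> H < fst p \<and> H < snd p}"
    unfolding E1_def E2_def S_def E3_def by simp
qed
end

theorem proposition10:
  fixes M :: "real measure" and T x\<^sub>0 :: real and h :: "real \<Rightarrow> real"
  assumes "0 < T"
    and "distr_nonneg M"
    and "local_long_tailed M T"
    and "concave_on {x\<^sub>0..} (\<lambda>x. - ln (int_prob M T x))"
    and "mono h" and "filterlim h at_top at_top"
    and "\<forall>\<epsilon>>0. eventually (\<lambda>x. \<forall>t. \<bar>t\<bar> \<le> h x \<longrightarrow>
            \<bar>int_prob M T (x + t) / int_prob M T x - 1\<bar> < \<epsilon>) at_top"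
    and "((\<lambda>x. x * int_prob M T (h x)) \<longlongrightarrow> 0) at_top"
  shows "local_subexp M T"
proof -
  have Tpos: "0 < T" by fact
  have prob: "prob_space M" and sM: "sets M = sets (borel::real measure)" and neg: "measure M {..<0} = 0"
    using assms(2) by (auto simp: distr_nonneg_def)
  interpret R: real_distribution M
    using prob sM by (simp add: real_distribution_def real_distribution_axioms_def)
  let ?f = "int_prob M T"
  have fpos_ev: "eventually (\<lambda>x. ?f x > 0) at_top"
    using assms(3) by (simp add: local_long_tailed_def)
  then obtain x1 where x1: "\<And>y. y \<ge> x1 \<Longrightarrow> ?f y > 0" by (auto simp: eventually_at_top_linorder)
  have glim: "filterlim (\<lambda>x. - ln (?f x)) at_top at_top"
  proof -
    have "filterlim ?f (at_right 0) at_top"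
      by (rule tendsto_imp_filterlim_at_right[OF f_lim[OF prob sM Tpos] fpos_ev])
    then have "filterlim (\<lambda>x. ln (?f x)) at_bot at_top" by (rule filterlim_compose[OF ln_at_0])
    then show ?thesis unfolding filterlim_uminus_at_top by simp
  qed
  define x2 where "x2 = max x\<^sub>0 x1"
  have mon: "?f b \<le> ?f a" if "x2 \<le> a" "a \<le> b" for a b
  proof -
    have "- ln (?f a) \<le> - ln (?f b)"
      by (rule concave_mono[OF assms(4) glim]) (use that in \<open>auto simp: x2_def\<close>)
    moreover have "?f a > 0" "?f b > 0" using that x1 by (auto simp: x2_def)
    ultimately show ?thesis by simp
  qed
  have Wl: "((\<lambda>x. (x / T + 2) * ?f (min (h x) (x/4) - 2 * T)) \<longlongrightarrow> 0) at_top"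
    by (rule W_lim[OF prob sM Tpos mon assms(6) assms(7) assms(8) fpos_ev])
  have Hlim: "filterlim (\<lambda>x. min (h x) (x/4)) at_top at_top"
    unfolding filterlim_at_top
  proof
    fix Z
    have "eventually (\<lambda>x. Z \<le> h x) at_top" using assms(6) by (simp add: filterlim_at_top)
    moreover have "eventually (\<lambda>x. Z \<le> x / 4) at_top"
      using lin_at_top[of 4 0] by (simp add: filterlim_at_top)
    ultimately show "eventually (\<lambda>x. Z \<le> min (h x) (x/4)) at_top" by eventually_elim auto
  qed
  have cdfl: "((\<lambda>x. cdf M (min (h x) (x/4))) \<longlongrightarrow> 1) at_top"
    by (rule filterlim_compose[OF R.cdf_lim_at_top_prob Hlim])
  have ae: "AE a in M. 0 \<le> a" by (rule AE_nonneg[OF prob sM Tpos neg])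
  have main: "eventually (\<lambda>x. \<bar>int_prob (M \<star> M) T x / (2 * ?f x) - 1\<bar> < \<epsilon>) at_top"
    if eps: "\<epsilon> > 0" for \<epsilon>
  proof -
    define d where "d = min (\<epsilon>/3) (1/2)"
    have d: "0 < d" "d \<le> 1/2" "d \<le> \<epsilon>/3" using eps by (auto simp: d_def)
    have ev_a: "eventually (\<lambda>x. \<forall>t. \<bar>t\<bar> \<le> h x \<longrightarrow> \<bar>?f (x + t) / ?f x - 1\<bar> < d) at_top"
      using assms(7) d by auto
    have ev_c: "eventually (\<lambda>x. max x2 0 + 2 * T \<le> min (h x) (x/4)) at_top"
      using Hlim unfolding filterlim_at_top by blast
    have ev_d: "eventually (\<lambda>x. cdf M (min (h x) (x/4)) > 1 - d) at_top"
      using order_tendstoD(1)[OF cdfl] d by simp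
    have "((\<lambda>x. (2 * (1 + d)) * ((x / T + 2) * ?f (min (h x) (x/4) - 2 * T))) \<longlongrightarrow> (2 * (1 + d)) * 0) at_top"
      by (intro tendsto_intros Wl)
    hence ev_e: "eventually (\<lambda>x. (2 * (1 + d)) * ((x / T + 2) * ?f (min (h x) (x/4) - 2 * T)) < d) at_top"
      using order_tendstoD(2) d by fastforce
    show ?thesis
      using ev_a fpos_ev ev_c ev_d ev_e eventually_ge_at_top[of 0]
    proof eventually_elim
      case (elim x)
      define H where "H = min (h x) (x/4)"
      define F where "F = ?f x"
      have F: "F > 0" using elim by (simp add: F_def)
      have Hh: "H \<le> h x" "H \<le> x / 4" by (auto simp: H_def)
      have H2': "max x2 0 + 2 * T \<le> H" using elim by (simp add: H_def)
      hence H2: "x2 + 2 * T \<le> H" by linarith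
      have x2: "x\<^sub>0 \<le> x2" "x1 \<le> x2" by (auto simp: x2_def)
      have H0: "0 \<le> H" using H2' Tpos by linarith
      have Hx: "2 * H \<le> x" using Hh elim by linarith
      have near: "(1 - d) * F \<le> ?f (x + t) \<and> ?f (x + t) \<le> (1 + d) * F" if "\<bar>t\<bar> \<le> h x" for t
      proof -
        have r: "\<bar>?f (x + t) / F - 1\<bar> < d" using elim that by (simp add: F_def)
        have eq: "?f (x + t) = (?f (x + t) / F) * F" using F by simp
        have "1 - d \<le> ?f (x + t) / F" "?f (x + t) / F \<le> 1 + d" using r by linarith+
        thus ?thesis using F by (simp add: le_divide_eq divide_le_eq)
      qed
      have near1: "(1 - d) * F \<le> ?f (x - a) \<and> ?f (x - a) \<le> (1 + d) * F" if "0 \<le> a" "a \<le> H" for a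
        using near[of "- a"] that Hh by simp
      have mH: "1 - d \<le> measure M {0..H}"
      proof -
        have "{..H} = {..<0} \<union> {0..H}" using H0 by auto
        hence "measure M {..H} \<le> measure M {..<0} + measure M {0..H}"
          by (simp add: measure_Un_le)
        moreover have "cdf M H > 1 - d" using elim by (simp add: H_def)
        ultimately show ?thesis using neg by (simp add: cdf_def2)
      qed
      have E1_1: "(1 - d) * ?f x * measure M {0..H} \<le> measure (M \<Otimes>\<^sub>M M) {p. x < fst p + snd p \<and> fst p + snd p \<le> x + T \<and> fst p \<le> H}"
        by (rule E1_bounds(1)[OF prob sM Tpos ae]) (use d near1 f_nonneg[OF prob sM Tpos] in \<open>auto simp: F_def\<close>)
      have E1_2: "measure (M \<Otimes>\<^sub>M M) {p. x < fst p + snd p \<and> fst p + snd p \<le> x + T \<and> fst p \<le> H} \<le> (1 + d) * ?f x"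
        by (rule E1_bounds(2)[OF prob sM Tpos ae]) (use d near1 f_nonneg[OF prob sM Tpos] in \<open>auto simp: F_def\<close>)
      have E1_3: "(1 - d) * ?f x * measure M {0..H} \<le> measure (M \<Otimes>\<^sub>M M) {p. x < fst p + snd p \<and> fst p + snd p \<le> x + T \<and> snd p \<le> H}"
        by (rule E1_bounds(3)[OF prob sM Tpos ae]) (use d near1 f_nonneg[OF prob sM Tpos] in \<open>auto simp: F_def\<close>)
      have E1_4: "measure (M \<Otimes>\<^sub>M M) {p. x < fst p + snd p \<and> fst p + snd p \<le> x + T \<and> snd p \<le> H} \<le> (1 + d) * ?f x"
        by (rule E1_bounds(4)[OF prob sM Tpos ae]) (use d near1 f_nonneg[OF prob sM Tpos] in \<open>auto simp: F_def\<close>)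
      note E1 = E1_1 E1_2 E1_3 E1_4
      have E3: "measure (M \<Otimes>\<^sub>M M) {p. x < fst p + snd p \<and> fst p + snd p \<le> x + T \<and> H < fst p \<and> H < snd p}
          \<le> (x / T + 2) * (?f (H - 2 * T) * (?f (x - T - (H - 2 * T)) + ?f (x - (H - 2 * T))))"
        by (rule E3_bound[OF prob sM Tpos assms(4) x1]) (use H2 x2 H0 Hx in auto)
      have a1: "\<bar>T - H\<bar> \<le> h x" using H2' Hh Tpos by (simp add: abs_le_iff)
      have a2: "\<bar>2 * T - H\<bar> \<le> h x" using H2' Hh Tpos by (simp add: abs_le_iff)
      have q1: "?f (x - T - (H - 2 * T)) \<le> (1 + d) * F"
        using near[OF a1] by (simp add: algebra_simps)
      have q2: "?f (x - (H - 2 * T)) \<le> (1 + d) * F"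
        using near[OF a2] by (simp add: algebra_simps)
      have "(x / T + 2) * (?f (H - 2 * T) * (?f (x - T - (H - 2 * T)) + ?f (x - (H - 2 * T))))
          \<le> (x / T + 2) * (?f (H - 2 * T) * (2 * (1 + d) * F))"
      proof -
        have qs: "?f (x - T - (H - 2 * T)) + ?f (x - (H - 2 * T)) \<le> 2 * (1 + d) * F"
          using q1 q2 by (simp add: algebra_simps)
        have "0 \<le> x / T + 2" using elim Tpos by simp
        then show ?thesis
          using qs f_nonneg[OF prob sM Tpos, of "H - 2 * T"]
          by (intro mult_left_mono) auto
      qed
      also have "\<dots> = ((2 * (1 + d)) * ((x / T + 2) * ?f (H - 2 * T))) * F" by (simp add: algebra_simps add_divide_distrib)
      also have "\<dots> \<le> d * F" using elim F by (intro mult_right_mono) (auto simp: H_def)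
      finally have E3': "measure (M \<Otimes>\<^sub>M M) {p. x < fst p + snd p \<and> fst p + snd p \<le> x + T \<and> H < fst p \<and> H < snd p} \<le> d * F"
        using E3 by linarith
      note D = decomp[OF prob sM Tpos Hx]
      define S where "S = measure (M \<Otimes>\<^sub>M M) {p. x < fst p + snd p \<and> fst p + snd p \<le> x + T}"
      have conv: "int_prob (M \<star> M) T x = S" unfolding S_def int_prob_def by (rule conv_eq[OF prob sM])
      have "(1 - d) * F * (1 - d) \<le> (1 - d) * F * measure M {0..H}"
        using mH d F by (intro mult_left_mono) auto
      hence lo: "2 * ((1 - d) * F * (1 - d)) \<le> S" using D(1) E1(1) E1(3) unfolding S_def F_def by linarith
      have up: "S \<le> 2 * ((1 + d) * F) + d * F" using D(2) E1(2) E1(4) E3' unfolding S_def F_def by linarith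
      have lo': "(1 - 2 * d) * (2 * F) \<le> S"
      proof -
        have "(1 - 2 * d) * (2 * F) \<le> 2 * ((1 - d) * F * (1 - d))"
          using F by (simp add: algebra_simps power2_eq_square)
        thus ?thesis using lo by linarith
      qed
      have e1: "(1 + 2 * d) * (2 * F) = 2 * F + 4 * (d * F)" by (simp add: algebra_simps)
      have e2: "2 * ((1 + d) * F) + d * F = 2 * F + 3 * (d * F)" by (simp add: algebra_simps)
      have "0 < d * F" using F d by simp
      moreover have "S \<le> 2 * F + 3 * (d * F)" using up e2 by argo
      ultimately have up': "S \<le> (1 + 2 * d) * (2 * F)" unfolding e1 by linarith
      have "1 - 2 * d \<le> S / (2 * F)" using lo' F by (simp add: le_divide_eq)
      moreover have "S / (2 * F) \<le> 1 + 2 * d" using up' F by (simp add: divide_le_eq)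
      ultimately have "\<bar>S / (2 * F) - 1\<bar> \<le> 2 * d" by linarith
      also have "\<dots> < \<epsilon>" using d eps by linarith
      finally show ?case using conv by (simp add: F_def)
    qed
  qed
  have "((\<lambda>x. int_prob (M \<star> M) T x / (2 * ?f x)) \<longlongrightarrow> 1) at_top"
    by (rule tendstoI) (use main in \<open>simp add: dist_real_def\<close>)
  hence equiv: "(\<lambda>x. int_prob (M \<star> M) T x) \<sim>[at_top] (\<lambda>x. 2 * ?f x)"
    by (rule asymp_equivI')
  have supp: "measure M {x<..} > 0" for x
  proof -
    have "0 < ?f (max x x1)" using x1 by simp
    also have "\<dots> \<le> measure M {x<..}" unfolding int_prob_def
      by (intro R.finite_measure_mono) auto
    finally show ?thesis .
  qed
  show ?thesis unfolding local_subexp_def using supp assms(3) equiv by auto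
qed
end
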